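(* Let $T$ be any finite rooted tree and let $T_{in}$ be its internal subtree. Then there exist a Bayesian network and an elimination order whose elimination tree $T'$ satisfies $T'_{in}\cong T_{in}$ (isomorphic as rooted directed trees).
   Context: Trees are directed with edges pointing toward the root. The internal subtree $T_{in}$ of a tree $T$ is the subgraph induced by its non-leaf nodes. A Bayesian network is a directed acyclic graph on a finite set of variables, each variable $x$ carrying a factor (conditional probability table) whose scope is $\{x\}\cup\mathrm{parents}(x)$. Given a total order $\sigma$ of the variables, the elimination graph is built as follows: create one leaf node for each factor of the network; maintain a current collection of factors (initially the network's factors), each attached to a node; process variables in the order $\sigma$, and when processing $x$, let $F$ be the set of current factors whose scope contains $x$, create a new node labelled $x$ with a directed edge from the node of each factor in $F$ to the new node, remove $F$ from the collection, and add a new factor attached to the new node with scope equal to the union of the scopes of $F$ minus $\{x\}$. When this graph is a tree it is called the elimination tree. *)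

theory Defs
  imports Main
begin

definition rooted_tree :: "'n set \<Rightarrow> ('n \<times> 'n) set \<Rightarrow> bool" where
  "rooted_tree V E \<longleftrightarrow> finite V \<and> E \<subseteq> V \<times> V \<and>
     (\<exists>r\<in>V. (\<forall>v. (r, v) \<notin> E) \<and>
             (\<forall>v\<in>V. v \<noteq> r \<longrightarrow> (\<exists>!w. (v, w) \<in> E)) \<and>
             (\<forall>v\<in>V. (v, r) \<in> E\<^sup>*))"

definition internal_nodes :: "'n set \<Rightarrow> ('n \<times> 'n) set \<Rightarrow> 'n set" where
  "internal_nodes V E = {v \<in> V. \<exists>u. (u, v) \<in> E}"

definition internal_edges :: "'n set \<Rightarrow> ('n \<times> 'n) set \<Rightarrow> ('n \<times> 'n) set" where
  "internal_edges V E = E \<inter> (internal_nodes V E \<times> internal_nodes V E)"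

definition digraph_iso :: "'a set \<Rightarrow> ('a \<times> 'a) set \<Rightarrow> 'b set \<Rightarrow> ('b \<times> 'b) set \<Rightarrow> bool" where
  "digraph_iso V1 E1 V2 E2 \<longleftrightarrow> E1 \<subseteq> V1 \<times> V1 \<and> E2 \<subseteq> V2 \<times> V2 \<and>
     (\<exists>f. bij_betw f V1 V2 \<and> (\<forall>u\<in>V1. \<forall>v\<in>V1. (u, v) \<in> E1 \<longleftrightarrow> (f u, f v) \<in> E2))"

definition bayes_net :: "'v set \<Rightarrow> ('v \<Rightarrow> 'v set) \<Rightarrow> bool" where
  "bayes_net X pa \<longleftrightarrow> finite X \<and> (\<forall>x\<in>X. pa x \<subseteq> X) \<and>
     acyclic {(p, x). x \<in> X \<and> p \<in> pa x}"

definition elim_order :: "'v set \<Rightarrow> 'v list \<Rightarrow> bool" where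
  "elim_order X \<sigma> \<longleftrightarrow> distinct \<sigma> \<and> set \<sigma> = X"

text \<open>Nodes of the elimination graph: one leaf per factor of the network (the factor
  of variable x), and one node per eliminated variable.\<close>

datatype 'v enode = Leaf 'v | Elim 'v

text \<open>The current factor collection is a set of pairs (attached node, scope);
  the second component accumulates the edges.\<close>

definition elim_step :: "'v \<Rightarrow> ('v enode \<times> 'v set) set \<times> ('v enode \<times> 'v enode) set
    \<Rightarrow> ('v enode \<times> 'v set) set \<times> ('v enode \<times> 'v enode) set" where
  "elim_step x = (\<lambda>(C, E).
     let F = {c \<in> C. x \<in> snd c}
     in ((C - F) \<union> {(Elim x, (\<Union>c\<in>F. snd c) - {x})},
         E \<union> {(fst c, Elim x) | c. c \<in> F}))"

definition init_factors :: "'v set \<Rightarrow> ('v \<Rightarrow> 'v set) \<Rightarrow> ('v enode \<times> 'v set) set" where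
  "init_factors X pa = {(Leaf x, insert x (pa x)) | x. x \<in> X}"

definition elim_nodes :: "'v set \<Rightarrow> 'v list \<Rightarrow> 'v enode set" where
  "elim_nodes X \<sigma> = Leaf ` X \<union> Elim ` set \<sigma>"

definition elim_edges :: "'v set \<Rightarrow> ('v \<Rightarrow> 'v set) \<Rightarrow> 'v list \<Rightarrow> ('v enode \<times> 'v enode) set" where
  "elim_edges X pa \<sigma> = snd (fold elim_step \<sigma> (init_factors X pa, {}))"

end

theory Submission
  imports Defs
begin


definition Cst :: "nat \<Rightarrow> (nat \<Rightarrow> nat set) \<Rightarrow> nat \<Rightarrow> (nat enode \<times> nat set) set" where
  "Cst n pa k = {(Leaf x, insert x (pa x)) | x. k \<le> x \<and> x < n} \<union>
     {(Elim x, pa x) | x. x < k \<and> (\<forall>p\<in>pa x. k \<le> p)}"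

definition Est :: "(nat \<Rightarrow> nat set) \<Rightarrow> nat \<Rightarrow> (nat enode \<times> nat enode) set" where
  "Est pa k = {(Leaf x, Elim x) | x. x < k} \<union> {(Elim c, Elim p) | c p. c < k \<and> p \<in> pa c \<and> p < k}"

lemma Cst_Leaf[simp]: "(Leaf x, s) \<in> Cst n pa k \<longleftrightarrow> s = insert x (pa x) \<and> k \<le> x \<and> x < n"
  unfolding Cst_def by blast
lemma Cst_Elim[simp]: "(Elim x, s) \<in> Cst n pa k \<longleftrightarrow> s = pa x \<and> x < k \<and> (\<forall>p\<in>pa x. k \<le> p)"
  unfolding Cst_def by blast
lemma Est_mem[simp]:
  "(Leaf x, Elim y) \<in> Est pa k \<longleftrightarrow> x = y \<and> x < k"
  "(Elim c, Elim p) \<in> Est pa k \<longleftrightarrow> c < k \<and> p \<in> pa c \<and> p < k"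
  "(a, Leaf z) \<notin> Est pa k"
  "(Elim c, b) \<in> Est pa k \<Longrightarrow> \<exists>p. b = Elim p"
  unfolding Est_def by blast+

lemma step_inv:
  assumes G1: "\<And>i j. i < n \<Longrightarrow> j \<in> pa i \<Longrightarrow> i < j \<and> j < n"
    and G2: "\<And>i j j'. i < n \<Longrightarrow> j \<in> pa i \<Longrightarrow> j' \<in> pa i \<Longrightarrow> j = j'"
    and k: "k < n"
  shows "elim_step k (Cst n pa k, Est pa k) = (Cst n pa (Suc k), Est pa (Suc k))"
proof -
  define Fk where "Fk = {(Leaf k, insert k (pa k))} \<union> {(Elim x, pa x) | x. x < k \<and> k \<in> pa x}"
  have F: "{c \<in> Cst n pa k. k \<in> snd c} = Fk"
  proof
    show "{c \<in> Cst n pa k. k \<in> snd c} \<subseteq> Fk"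
    proof
      fix z assume z: "z \<in> {c \<in> Cst n pa k. k \<in> snd c}"
      obtain b s where zz: "z = (b, s)" by fastforce
      show "z \<in> Fk"
      proof (cases b)
        case (Leaf x)
        have x: "s = insert x (pa x)" "k \<le> x" "x < n" "k \<in> s" using z unfolding zz Leaf by auto
        have "x = k"
        proof (rule ccontr)
          assume "x \<noteq> k"
          then have "k \<in> pa x" using x by auto
          then have "x < k" using G1[OF x(3)] by blast
          then show False using x by simp
        qed
        then show ?thesis unfolding zz Leaf Fk_def using x by auto
      next
        case (Elim x)
        have x: "s = pa x" "x < k" "k \<in> s" using z unfolding zz Elim by auto
        then show ?thesis unfolding zz Elim Fk_def by auto
      qed
    qed
    show "Fk \<subseteq> {c \<in> Cst n pa k. k \<in> snd c}"
    proof
      fix c assume "c \<in> Fk"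
      then consider "c = (Leaf k, insert k (pa k))" | x where "c = (Elim x, pa x)" "x < k" "k \<in> pa x"
        unfolding Fk_def by blast
      then show "c \<in> {c \<in> Cst n pa k. k \<in> snd c}"
      proof cases
        case 1 then show ?thesis using k unfolding Cst_def by auto
      next
        case 2
        have "\<forall>p\<in>pa x. k \<le> p" using G2[of x k] 2 k by (metis order.order_iff_strict less_trans order.strict_implies_order)
        then show ?thesis using 2 unfolding Cst_def by auto
      qed
    qed
  qed
  have kk: "k \<notin> pa k" using G1[of k k] k by auto
  have U: "(\<Union>c\<in>Fk. snd c) - {k} = pa k"
  proof
    show "pa k \<subseteq> (\<Union>c\<in>Fk. snd c) - {k}" unfolding Fk_def using kk by auto
    show "(\<Union>c\<in>Fk. snd c) - {k} \<subseteq> pa k"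
    proof
      fix z assume "z \<in> (\<Union>c\<in>Fk. snd c) - {k}"
      then obtain c where c: "c \<in> Fk" "z \<in> snd c" "z \<noteq> k" by blast
      from c(1) consider "c = (Leaf k, insert k (pa k))" | x where "c = (Elim x, pa x)" "x < k" "k \<in> pa x"
        unfolding Fk_def by blast
      then show "z \<in> pa k"
      proof cases
        case 1 then show ?thesis using c by simp
      next
        case 2
        have "z \<in> pa x" using c 2 by simp
        then have "z = k" using G2[of x z k] 2 k by simp
        then show ?thesis using c by simp
      qed
    qed
  qed
  have FL: "(Leaf x, s) \<in> Fk \<longleftrightarrow> x = k \<and> s = insert k (pa k)" for x s
    unfolding Fk_def by blast
  have FE: "(Elim x, s) \<in> Fk \<longleftrightarrow> s = pa x \<and> x < k \<and> k \<in> pa x" for x s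
    unfolding Fk_def by blast
  have a: "Suc k \<le> p" if "p \<in> pa k" for p using G1[OF k that] by simp
  have C: "(Cst n pa k - Fk) \<union> {(Elim k, pa k)} = Cst n pa (Suc k)"
  proof (rule set_eqI)
    fix z :: "nat enode \<times> nat set"
    obtain b s where z: "z = (b, s)" by fastforce
    show "z \<in> (Cst n pa k - Fk) \<union> {(Elim k, pa k)} \<longleftrightarrow> z \<in> Cst n pa (Suc k)"
    proof (cases b)
      case (Leaf x)
      then show ?thesis unfolding z by (cases "x = k") (auto simp: FL)
    next
      case (Elim x)
      have eq: "x < Suc k \<and> (\<forall>p\<in>pa x. Suc k \<le> p) \<longleftrightarrow> (x = k \<or> (x < k \<and> (\<forall>p\<in>pa x. k \<le> p) \<and> k \<notin> pa x))"
        using a by (auto simp: Suc_le_eq le_less)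
      show ?thesis unfolding z Elim using eq by (auto simp: FE)
    qed
  qed
  have E: "Est pa k \<union> {(fst c, Elim k) | c. c \<in> Fk} = Est pa (Suc k)"
  proof (rule set_eqI)
    fix z :: "nat enode \<times> nat enode"
    obtain b d where z: "z = (b, d)" by fastforce
    have lt: "\<And>c p. c < n \<Longrightarrow> p \<in> pa c \<Longrightarrow> c < p" using G1 by blast
    have e2: "{(fst c, Elim k) | c. c \<in> Fk} = {(Leaf k, Elim k)} \<union> {(Elim x, Elim k) | x. x < k \<and> k \<in> pa x}"
      unfolding Fk_def by auto
    show "z \<in> Est pa k \<union> {(fst c, Elim k) | c. c \<in> Fk} \<longleftrightarrow> z \<in> Est pa (Suc k)"
    proof (cases b)
      case (Leaf x)
      then show ?thesis unfolding z e2 by (cases d) (auto simp: less_Suc_eq)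
    next
      case (Elim c)
      show ?thesis
      proof (cases d)
        case (Leaf y) then show ?thesis unfolding z e2 by simp
      next
        case (Elim p)
        have "c < Suc k \<and> p \<in> pa c \<and> p < Suc k \<longleftrightarrow> (c < k \<and> p \<in> pa c \<and> p < k) \<or> (p = k \<and> c < k \<and> k \<in> pa c)"
          using lt[of c p] lt[of k p] k kk by (auto simp: less_Suc_eq)
        then show ?thesis unfolding z e2 Elim \<open>b = Elim c\<close> by auto
      qed
    qed
  qed
  show ?thesis unfolding elim_step_def Let_def prod.case F U C E by (rule refl)
qed


lemma fold_inv:
  assumes G1: "\<And>i j. i < n \<Longrightarrow> j \<in> pa i \<Longrightarrow> i < j \<and> j < n"
    and G2: "\<And>i j j'. i < n \<Longrightarrow> j \<in> pa i \<Longrightarrow> j' \<in> pa i \<Longrightarrow> j = j'"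
  shows "k \<le> n \<Longrightarrow> fold elim_step [0..<k] (init_factors {0..<n} pa, {}) = (Cst n pa k, Est pa k)"
proof (induction k)
  case 0
  have "init_factors {0..<n} pa = Cst n pa 0" unfolding init_factors_def Cst_def by auto
  moreover have "Est pa 0 = {}" unfolding Est_def by auto
  ultimately show ?case by simp
next
  case (Suc k)
  then have "fold elim_step [0..<k] (init_factors {0..<n} pa, {}) = (Cst n pa k, Est pa k)" by simp
  then show ?case using step_inv[OF G1 G2, where k=k] Suc.prems by simp
qed

lemma elim_edges_eq:
  assumes G1: "\<And>i j. i < n \<Longrightarrow> j \<in> pa i \<Longrightarrow> i < j \<and> j < n"
    and G2: "\<And>i j j'. i < n \<Longrightarrow> j \<in> pa i \<Longrightarrow> j' \<in> pa i \<Longrightarrow> j = j'"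
  shows "elim_edges {0..<n} pa [0..<n] = Est pa n"
  unfolding elim_edges_def using fold_inv[OF G1 G2, where k=n] by simp

lemma Est_reach:
  assumes G1: "\<And>i j. i < n \<Longrightarrow> j \<in> pa i \<Longrightarrow> i < j \<and> j < n"
    and R: "\<And>i. i < n \<Longrightarrow> pa i = {} \<Longrightarrow> i = ri"
  shows "i < n \<Longrightarrow> (Elim i, Elim ri) \<in> (Est pa n)\<^sup>*"
proof (induction "n - i" arbitrary: i rule: less_induct)
  case less
  show ?case
  proof (cases "pa i = {}")
    case True
    then show ?thesis using R less.prems by simp
  next
    case False
    then obtain p where p: "p \<in> pa i" by blast
    then have ip: "i < p" "p < n" using G1[OF less.prems p] by auto
    then have "(Elim p, Elim ri) \<in> (Est pa n)\<^sup>*" using less.hyps[of p] by simp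
    moreover have "(Elim i, Elim p) \<in> Est pa n" using p ip less.prems by simp
    ultimately show ?thesis by (rule converse_rtrancl_into_rtrancl[rotated])
  qed
qed

lemma elim_tree:
  assumes G1: "\<And>i j. i < n \<Longrightarrow> j \<in> pa i \<Longrightarrow> i < j \<and> j < n"
    and G2: "\<And>i j j'. i < n \<Longrightarrow> j \<in> pa i \<Longrightarrow> j' \<in> pa i \<Longrightarrow> j = j'"
    and ri: "ri < n" "pa ri = {}"
    and R: "\<And>i. i < n \<Longrightarrow> pa i = {} \<Longrightarrow> i = ri"
  shows "rooted_tree (Leaf ` {0..<n} \<union> Elim ` {0..<n}) (Est pa n)"
proof -
  let ?N = "Leaf ` {0..<n} \<union> Elim ` {0..<n}"
  have sub: "Est pa n \<subseteq> ?N \<times> ?N"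
  proof
    fix z assume z: "z \<in> Est pa n"
    then consider x where "z = (Leaf x, Elim x)" "x < n" | c p where "z = (Elim c, Elim p)" "c < n" "p \<in> pa c" "p < n"
      unfolding Est_def by blast
    then show "z \<in> ?N \<times> ?N"
    proof cases
      case 1
      then have "Leaf x \<in> ?N" "Elim x \<in> ?N" by (simp_all add: imageI)
      then show ?thesis using 1 by blast
    next
      case 2
      then have "Elim c \<in> ?N" "Elim p \<in> ?N" by (simp_all add: imageI)
      then show ?thesis using 2 by blast
    qed
  qed
  have noout: "\<forall>v. (Elim ri, v) \<notin> Est pa n"
  proof
    fix v show "(Elim ri, v) \<notin> Est pa n"
      using Est_mem(4)[of ri v pa n] ri by (cases v) auto
  qed
  have uniq: "\<forall>v\<in>?N. v \<noteq> Elim ri \<longrightarrow> (\<exists>!w. (v, w) \<in> Est pa n)"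
  proof (intro ballI impI)
    fix v assume v: "v \<in> ?N" "v \<noteq> Elim ri"
    show "\<exists>!w. (v, w) \<in> Est pa n"
    proof (cases v)
      case (Leaf x)
      then have "x < n" using v by auto
      then show ?thesis unfolding Leaf
        apply (intro ex1I[of _ "Elim x"]) apply simp
        subgoal for w by (cases w) (auto simp: Est_def)
        done
    next
      case (Elim c)
      then have c: "c < n" "c \<noteq> ri" using v by auto
      then obtain p where p: "p \<in> pa c" using R by blast
      then have pn: "p < n" using G1[OF c(1) p] by blast
      show ?thesis unfolding Elim
      proof (intro ex1I[of _ "Elim p"])
        show "(Elim c, Elim p) \<in> Est pa n" using p pn c by simp
        fix w assume w: "(Elim c, w) \<in> Est pa n"
        then obtain q where q: "w = Elim q" using Est_mem(4) by blast
        then have "q \<in> pa c" using w by simp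
        then show "w = Elim p" using G2[OF c(1) _ p] q by simp
      qed
    qed
  qed
  have r: "(Elim x, Elim ri) \<in> (Est pa n)\<^sup>*" if "x < n" for x
    by (rule Est_reach[where n=n and pa=pa and ri=ri, OF G1 R that])
  have reach: "\<forall>v\<in>?N. (v, Elim ri) \<in> (Est pa n)\<^sup>*"
  proof
    fix v assume v: "v \<in> ?N"
    then consider x where "v = Leaf x" "x < n" | x where "v = Elim x" "x < n" by auto
    then show "(v, Elim ri) \<in> (Est pa n)\<^sup>*"
    proof cases
      case 1
      have "(Leaf x, Elim x) \<in> Est pa n" using 1 by simp
      then show ?thesis using r[OF 1(2)] unfolding 1(1)
        by (rule converse_rtrancl_into_rtrancl)
    next
      case 2 then show ?thesis using r by simp
    qed
  qed
  have rN: "Elim ri \<in> ?N" using ri by simp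
  have fin: "finite ?N" by simp
  show ?thesis unfolding rooted_tree_def
    using fin sub rN noout uniq reach by (intro conjI bexI[of _ "Elim ri"])
qed

lemma elim_internal:
  assumes G1: "\<And>i j. i < n \<Longrightarrow> j \<in> pa i \<Longrightarrow> i < j \<and> j < n"
  shows "internal_nodes (Leaf ` {0..<n} \<union> Elim ` {0..<n}) (Est pa n) = Elim ` {0..<n}"
    and "internal_edges (Leaf ` {0..<n} \<union> Elim ` {0..<n}) (Est pa n) =
           {(Elim c, Elim p) | c p. c < n \<and> p \<in> pa c}"
proof -
  show I: "internal_nodes (Leaf ` {0..<n} \<union> Elim ` {0..<n}) (Est pa n) = Elim ` {0..<n}"
  proof
    show "internal_nodes (Leaf ` {0..<n} \<union> Elim ` {0..<n}) (Est pa n) \<subseteq> Elim ` {0..<n}"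
      unfolding internal_nodes_def using Est_mem(3) by blast
    show "Elim ` {0..<n} \<subseteq> internal_nodes (Leaf ` {0..<n} \<union> Elim ` {0..<n}) (Est pa n)"
    proof
      fix v assume "v \<in> Elim ` {0..<n}"
      then obtain x where x: "v = Elim x" "x < n" by auto
      then have "(Leaf x, Elim x) \<in> Est pa n" by simp
      moreover have "Elim x \<in> Elim ` {0..<n}" using x by simp
      ultimately show "v \<in> internal_nodes (Leaf ` {0..<n} \<union> Elim ` {0..<n}) (Est pa n)"
        unfolding internal_nodes_def x(1) by blast
    qed
  qed
  show "internal_edges (Leaf ` {0..<n} \<union> Elim ` {0..<n}) (Est pa n) =
           {(Elim c, Elim p) | c p. c < n \<and> p \<in> pa c}"
    unfolding internal_edges_def I
  proof (rule set_eqI)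
    fix z :: "nat enode \<times> nat enode"
    obtain a b where z: "z = (a, b)" by fastforce
    show "z \<in> Est pa n \<inter> (Elim ` {0..<n} \<times> Elim ` {0..<n}) \<longleftrightarrow> z \<in> {(Elim c, Elim p) | c p. c < n \<and> p \<in> pa c}"
    proof (cases a)
      case (Leaf x) then show ?thesis unfolding z by auto
    next
      case (Elim c)
      show ?thesis
      proof (cases b)
        case (Leaf y) then show ?thesis unfolding z by auto
      next
        case (Elim p)
        have "c < n \<Longrightarrow> p \<in> pa c \<Longrightarrow> p < n" using G1[of c p] by blast
        then show ?thesis unfolding z Elim \<open>a = Elim c\<close> by auto
      qed
    qed
  qed
qed



lemma det_cycle:
  assumes det0: "\<forall>v w w'. (v, w) \<in> E \<longrightarrow> (v, w') \<in> E \<longrightarrow> w = w'"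
    and cyc: "(c, c) \<in> E\<^sup>+"
  shows "(c, y) \<in> E\<^sup>* \<Longrightarrow> (y, c) \<in> E\<^sup>*"
proof (induction rule: rtrancl_induct)
  case base then show ?case by simp
next
  case (step y z)
  have "(y, c) \<in> E\<^sup>+"
  proof (cases "y = c")
    case True then show ?thesis using cyc by simp
  next
    case False then show ?thesis using step.IH by (simp add: rtrancl_eq_or_trancl)
  qed
  then obtain w where w: "(y, w) \<in> E" "(w, c) \<in> E\<^sup>*" by (meson tranclD)
  have "w = z" using det0 w(1) step.hyps(2) by blast
  then show ?case using w by simp
qed

lemma tree_acyclic:
  assumes "rooted_tree V E"
  shows "acyclic E"
proof -
  from assms obtain r where EV: "E \<subseteq> V \<times> V" and r: "r \<in> V" "\<forall>v. (r, v) \<notin> E"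
    and uniq: "\<forall>v\<in>V. v \<noteq> r \<longrightarrow> (\<exists>!w. (v, w) \<in> E)" and reach: "\<forall>v\<in>V. (v, r) \<in> E\<^sup>*"
    unfolding rooted_tree_def by blast
  have det: "w = w'" if "(v, w) \<in> E" "(v, w') \<in> E" for v w w'
  proof -
    have "v \<in> V" using that EV by blast
    moreover have "v \<noteq> r" using that r by blast
    ultimately show ?thesis using uniq that by blast
  qed
  show ?thesis unfolding acyclic_def
  proof (intro allI notI)
    fix c assume cyc: "(c, c) \<in> E\<^sup>+"
    then obtain w where "(c, w) \<in> E" by (meson tranclD)
    then have "c \<in> V" using EV by blast
    then have "(c, r) \<in> E\<^sup>*" using reach by blast
    have det0: "\<forall>v w w'. (v, w) \<in> E \<longrightarrow> (v, w') \<in> E \<longrightarrow> w = w'" using det by blast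
    have "(r, c) \<in> E\<^sup>*" using det_cycle[OF det0 cyc] \<open>(c, r) \<in> E\<^sup>*\<close> by blast
    then have "(r, c) \<in> E\<^sup>+" using cyc by (rule rtrancl_trancl_trancl)
    then obtain u where "(r, u) \<in> E" by (meson tranclD)
    then show False using r by blast
  qed
qed

lemma topo:
  fixes R :: "('a \<times> 'a) set"
  assumes "finite A" "acyclic R"
  shows "\<exists>\<tau>. distinct \<tau> \<and> set \<tau> = A \<and>
     (\<forall>i j. i < length \<tau> \<longrightarrow> j < length \<tau> \<longrightarrow> (\<tau>!i, \<tau>!j) \<in> R \<longrightarrow> i < j)"
  using assms
proof (induction "card A" arbitrary: A)
  case 0
  then have "A = {}" by simp
  then show ?case by (intro exI[of _ "[]"]) simp
next
  case (Suc m)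
  then have ne: "A \<noteq> {}" by auto
  then obtain a where a: "a \<in> A" by blast
  have fin: "finite (R \<inter> A \<times> A)" using Suc.prems by simp
  have acy: "acyclic (R \<inter> A \<times> A)" using Suc.prems(2) by (rule acyclic_subset) blast
  have wf: "wf ((R \<inter> A \<times> A)\<inverse>)" by (rule finite_acyclic_wf_converse[OF fin acy])
  obtain s where s: "s \<in> A" "\<And>y. (y, s) \<in> (R \<inter> A \<times> A)\<inverse> \<Longrightarrow> y \<notin> A"
    by (rule wfE_min[OF wf a]) (rule that; blast)
  have sink: "\<And>y. y \<in> A \<Longrightarrow> (s, y) \<notin> R" using s by blast
  have c: "m = card (A - {s})" using Suc.hyps(2) s(1) Suc.prems(1) by simp
  obtain \<tau> where t: "distinct \<tau>" "set \<tau> = A - {s}"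
    "\<forall>i j. i < length \<tau> \<longrightarrow> j < length \<tau> \<longrightarrow> (\<tau>!i, \<tau>!j) \<in> R \<longrightarrow> i < j"
    using Suc.hyps(1)[OF c _ Suc.prems(2)] Suc.prems(1) by blast
  have sn: "s \<notin> set \<tau>" using t(2) by simp
  have P: "\<forall>i j. i < length (\<tau> @ [s]) \<longrightarrow> j < length (\<tau> @ [s]) \<longrightarrow> ((\<tau> @ [s])!i, (\<tau> @ [s])!j) \<in> R \<longrightarrow> i < j"
  proof (intro allI impI)
    fix i j assume ij: "i < length (\<tau> @ [s])" "j < length (\<tau> @ [s])" "((\<tau> @ [s]) ! i, (\<tau> @ [s]) ! j) \<in> R"
    have mem: "(\<tau> @ [s]) ! j \<in> A"
    proof (cases "j < length \<tau>")
      case True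
      then have "(\<tau> @ [s]) ! j = \<tau> ! j" by (simp add: nth_append)
      moreover have "\<tau> ! j \<in> set \<tau>" using True by simp
      ultimately show ?thesis using t(2) by simp
    next
      case False
      then have "j = length \<tau>" using ij(2) by simp
      then show ?thesis using s(1) by simp
    qed
    show "i < j"
    proof (cases "i < length \<tau>")
      case False
      then have "i = length \<tau>" using ij by simp
      then have "(s, (\<tau> @ [s]) ! j) \<in> R" using ij(3) by simp
      then show ?thesis using sink mem by blast
    next
      case True
      show ?thesis
      proof (cases "j < length \<tau>")
        case True
        have "(\<tau> ! i, \<tau> ! j) \<in> R" using ij(3) True \<open>i < length \<tau>\<close> by (simp add: nth_append)
        then show ?thesis using t(3) True \<open>i < length \<tau>\<close> by blast
      next
        case False
        then show ?thesis using \<open>i < length \<tau>\<close> ij(2) by simp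
      qed
    qed
  qed
  have "distinct (\<tau> @ [s])" using t(1) sn by simp
  moreover have "set (\<tau> @ [s]) = A" using t(2) s(1) by auto
  ultimately show ?case using P by blast
qed



theorem lemma8:
  fixes V :: "'n set" and E :: "('n \<times> 'n) set"
  assumes "rooted_tree V E"
    and "E \<noteq> {}"
  shows "\<exists>(X :: nat set) pa \<sigma>. bayes_net X pa \<and> elim_order X \<sigma> \<and>
           rooted_tree (elim_nodes X \<sigma>) (elim_edges X pa \<sigma>) \<and>
           digraph_iso (internal_nodes (elim_nodes X \<sigma>) (elim_edges X pa \<sigma>))
                       (internal_edges (elim_nodes X \<sigma>) (elim_edges X pa \<sigma>))
                       (internal_nodes V E) (internal_edges V E)"
proof -
  from assms(1) obtain r where finV: "finite V" and EV: "E \<subseteq> V \<times> V" and r: "r \<in> V" "\<forall>v. (r, v) \<notin> E"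
    and uniq: "\<forall>v\<in>V. v \<noteq> r \<longrightarrow> (\<exists>!w. (v, w) \<in> E)" and reach: "\<forall>v\<in>V. (v, r) \<in> E\<^sup>*"
    unfolding rooted_tree_def by blast
  define Vi where "Vi = internal_nodes V E"
  have ViV: "Vi \<subseteq> V" unfolding Vi_def internal_nodes_def by blast
  have finVi: "finite Vi" using finV ViV finite_subset by blast
  have parVi: "w \<in> Vi" if "(x, w) \<in> E" for x w
    using that EV unfolding Vi_def internal_nodes_def by blast
  have rVi: "r \<in> Vi"
  proof -
    obtain z where z: "z \<in> E" using assms(2) by blast
    obtain u v where uv: "(u, v) \<in> E" using z by (metis surj_pair)
    then have "v \<in> V" using EV by blast
    then have vr: "(v, r) \<in> E\<^sup>*" using reach by blast
    show ?thesis
    proof (cases "v = r")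
      case True then show ?thesis using parVi uv by blast
    next
      case False
      then obtain y where "(y, r) \<in> E" using vr by (meson rtranclE)
      then show ?thesis using parVi by blast
    qed
  qed
  obtain \<tau> where t: "distinct \<tau>" "set \<tau> = Vi"
    "\<forall>i j. i < length \<tau> \<longrightarrow> j < length \<tau> \<longrightarrow> (\<tau>!i, \<tau>!j) \<in> E \<longrightarrow> i < j"
    using topo[OF finVi tree_acyclic[OF assms(1)]] by blast
  define n where "n = length \<tau>"
  define pa where "pa = (\<lambda>i. {j. j < n \<and> (\<tau>!i, \<tau>!j) \<in> E})"
  have memV: "\<tau> ! i \<in> V" if "i < n" for i
    using that t(2) ViV unfolding n_def by (metis nth_mem subsetD)
  have inj: "i = j" if "i < n" "j < n" "\<tau> ! i = \<tau> ! j" for i j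
    using that t(1) unfolding n_def by (simp add: nth_eq_iff_index_eq)
  have G1: "i < j \<and> j < n" if "i < n" "j \<in> pa i" for i j
    using that t(3) unfolding pa_def n_def by blast
  have G2: "j = j'" if "i < n" "j \<in> pa i" "j' \<in> pa i" for i j j'
  proof -
    have e: "(\<tau>!i, \<tau>!j) \<in> E" "(\<tau>!i, \<tau>!j') \<in> E" "j < n" "j' < n" using that unfolding pa_def by auto
    have "\<tau>!i \<noteq> r" using e r(2) by blast
    then have "\<exists>!w. (\<tau>!i, w) \<in> E" using uniq memV[OF that(1)] by blast
    then have "\<tau>!j = \<tau>!j'" using e by blast
    then show ?thesis using inj e by blast
  qed
  obtain ri where ri: "ri < n" "\<tau> ! ri = r" using rVi t(2) unfolding n_def by (metis in_set_conv_nth)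
  have pari: "pa ri = {}" unfolding pa_def using ri r(2) by blast
  have R: "i = ri" if il: "i < n" and pe: "pa i = {}" for i
  proof (rule ccontr)
    assume "i \<noteq> ri"
    then have "\<tau>!i \<noteq> r" using inj il ri by metis
    then obtain w where w: "(\<tau>!i, w) \<in> E" using uniq memV[OF il] by blast
    then have "w \<in> set \<tau>" using parVi t(2) by blast
    then obtain j where "j < n" "\<tau>!j = w" unfolding n_def by (metis in_set_conv_nth)
    then have "j \<in> pa i" unfolding pa_def using w by blast
    then show False using pe by blast
  qed
  define X where "X = {0..<n}"
  define \<sigma> where "\<sigma> = [0..<n]"
  have nodes: "elim_nodes X \<sigma> = Leaf ` {0..<n} \<union> Elim ` {0..<n}"
    unfolding elim_nodes_def X_def \<sigma>_def by simp
  have edges: "elim_edges X pa \<sigma> = Est pa n"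
    unfolding X_def \<sigma>_def by (rule elim_edges_eq[where n=n and pa=pa, OF G1 G2])
  have bn: "bayes_net X pa"
  proof -
    have sub: "\<forall>x\<in>X. pa x \<subseteq> X" unfolding X_def pa_def by auto
    have "{(p, x). x \<in> X \<and> p \<in> pa x}\<inverse> \<subseteq> less_than"
    proof
      fix z assume "z \<in> {(p, x). x \<in> X \<and> p \<in> pa x}\<inverse>"
      then obtain x p where z: "z = (x, p)" "x \<in> X" "p \<in> pa x" by blast
      then have "x < p" using G1[of x p] unfolding X_def by simp
      then show "z \<in> less_than" using z by simp
    qed
    then have "wf ({(p, x). x \<in> X \<and> p \<in> pa x}\<inverse>)" using wf_less_than wf_subset by blast
    then have "acyclic ({(p, x). x \<in> X \<and> p \<in> pa x}\<inverse>)" by (rule wf_acyclic)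
    then have "acyclic {(p, x). x \<in> X \<and> p \<in> pa x}" by simp
    then show ?thesis unfolding bayes_net_def using sub unfolding X_def by simp
  qed
  have eo: "elim_order X \<sigma>" unfolding elim_order_def X_def \<sigma>_def by simp
  have rt: "rooted_tree (elim_nodes X \<sigma>) (elim_edges X pa \<sigma>)"
    unfolding nodes edges by (rule elim_tree[where n=n and pa=pa and ri=ri, OF G1 G2 ri(1) pari R])
  have IN: "internal_nodes (elim_nodes X \<sigma>) (elim_edges X pa \<sigma>) = Elim ` {0..<n}"
    unfolding nodes edges by (rule elim_internal(1)[where n=n and pa=pa, OF G1])
  have IE: "internal_edges (elim_nodes X \<sigma>) (elim_edges X pa \<sigma>) = {(Elim c, Elim p) | c p. c < n \<and> p \<in> pa c}"
    unfolding nodes edges by (rule elim_internal(2)[where n=n and pa=pa, OF G1])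
  define f where "f = (\<lambda>v. case v of Elim i \<Rightarrow> \<tau> ! i | Leaf i \<Rightarrow> \<tau> ! i)"
  have iso: "digraph_iso (Elim ` {0..<n}) {(Elim c, Elim p) | c p. c < n \<and> p \<in> pa c} Vi (internal_edges V E)"
    unfolding digraph_iso_def
  proof (intro conjI exI[of _ f])
    show "{(Elim c, Elim p) | c p. c < n \<and> p \<in> pa c} \<subseteq> Elim ` {0..<n} \<times> Elim ` {0..<n}"
    proof
      fix z assume "z \<in> {(Elim c, Elim p) | c p. c < n \<and> p \<in> pa c}"
      then obtain c p where z: "z = (Elim c, Elim p)" "c < n" "p \<in> pa c" by blast
      then have "p < n" using G1[of c p] by simp
      then show "z \<in> Elim ` {0..<n} \<times> Elim ` {0..<n}" using z by simp
    qed
    show "internal_edges V E \<subseteq> Vi \<times> Vi" unfolding internal_edges_def Vi_def by blast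
    have fE: "f (Elim i) = \<tau> ! i" for i unfolding f_def by simp
    have "bij_betw (nth \<tau>) {..<n} Vi" using t(1,2) unfolding n_def by (intro bij_betw_nth) auto
    moreover have "bij_betw Elim {..<n} (Elim ` {0..<n})" by (simp add: bij_betw_def inj_on_def lessThan_atLeast0)
    ultimately have "bij_betw (nth \<tau> \<circ> the_inv_into {..<n} Elim) (Elim ` {0..<n}) Vi"
      using bij_betw_the_inv_into bij_betw_trans by blast
    moreover have "\<And>v. v \<in> Elim ` {0..<n} \<Longrightarrow> (nth \<tau> \<circ> the_inv_into {..<n} Elim) v = f v"
    proof -
      fix v assume "v \<in> Elim ` {0..<n}"
      then obtain i where i: "v = Elim i" "i < n" by auto
      have "the_inv_into {..<n} Elim (Elim i) = i"
        by (rule the_inv_into_f_eq) (auto simp: inj_on_def i)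
      then show "(nth \<tau> \<circ> the_inv_into {..<n} Elim) v = f v" using i fE by simp
    qed
    ultimately show "bij_betw f (Elim ` {0..<n}) Vi" using bij_betw_cong by blast
    show "\<forall>u\<in>Elim ` {0..<n}. \<forall>v\<in>Elim ` {0..<n}.
            ((u, v) \<in> {(Elim c, Elim p) | c p. c < n \<and> p \<in> pa c}) = ((f u, f v) \<in> internal_edges V E)"
    proof (intro ballI)
      fix u v assume u: "u \<in> Elim ` {0..<n}" and v: "v \<in> Elim ` {0..<n}"
      then obtain i j where ij: "u = Elim i" "v = Elim j" "i < n" "j < n" by auto
      have "\<tau> ! i \<in> Vi" "\<tau> ! j \<in> Vi" using ij t(2) unfolding n_def by auto
      then have "(\<tau> ! i, \<tau> ! j) \<in> internal_edges V E \<longleftrightarrow> (\<tau> ! i, \<tau> ! j) \<in> E"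
        unfolding internal_edges_def Vi_def by blast
      moreover have "(Elim i, Elim j) \<in> {(Elim c, Elim p) | c p. c < n \<and> p \<in> pa c} \<longleftrightarrow> j \<in> pa i"
        using ij by auto
      moreover have "j \<in> pa i \<longleftrightarrow> (\<tau> ! i, \<tau> ! j) \<in> E" unfolding pa_def using ij by simp
      ultimately show "((u, v) \<in> {(Elim c, Elim p) | c p. c < n \<and> p \<in> pa c}) = ((f u, f v) \<in> internal_edges V E)"
        using ij fE by simp
    qed
  qed
  show ?thesis
    apply (rule exI[of _ X], rule exI[of _ pa], rule exI[of _ \<sigma>])
    using bn eo rt iso unfolding IN IE Vi_def by blast
qed

end
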